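(* Consider the control system, with state $(J_1,J_3,K_2,Q_2,J_0,Q_1,K_1,Q_3,K_3,J_2)\in\mathbb{R}^{10}$ and scalar control $g(t)$, \[ \begin{aligned} \dot J_1&=2gJ_3,\quad \dot J_3=-2gJ_1+2gK_2,\quad \dot K_2=2gJ_3+2Q_2,\quad \dot Q_2=-2K_2,\\ \dot J_0&=-2gQ_1,\quad \dot Q_1=-2gJ_0-2K_1+2gQ_3,\quad \dot K_1=2Q_1+2gK_3,\\ \dot Q_3&=-2gQ_1-2K_3,\quad \dot K_3=-2gK_1+2Q_3-2gJ_2,\quad \dot J_2=-2gK_3, \end{aligned} \] with initial state $(J_1,J_3,K_2,Q_2)=(-1,0,0,0)$, $(J_0,Q_1,K_1,Q_3,K_3,J_2)=(1,0,0,0,0,0)$ and target state $(J_1,J_3,K_2,Q_2)=(1,0,0,0)$, $(J_0,Q_1,K_1,Q_3,K_3,J_2)=(1,0,0,0,0,0)$. Let $m\in\{3,5,7,\ldots\}$ be an odd integer and let the control bound $G_0$ satisfy \[ \frac{m}{m^2+1}\le G_0<\frac{m-2}{(m-2)^2+1}. \] Then the minimum time $T>0$ at which the target state can be reached from the initial state using a constant control $g(t)\equiv G$ with $0<G\le G_0$ is \[ T=\frac{\pi}{2}\sqrt{m^2+1}, \] attained with the constant control $G=m/(m^2+1)$.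
   Context: Here $g(t)$ is the photon–phonon coupling rate (in units of the mechanical frequency) of a cavity optomechanical system, and the target corresponds to swapping photon and phonon populations. *)

theory Defs
  imports "HOL-Analysis.Analysis"
begin

text \<open>The state is written as ten real-valued functions of time.
  reach G T: the solution starting at the initial state at time 0 is at
  the target state at time T (the solution of the linear ODE is unique,
  so existence of such a solution is the same as reachability).\<close>

definition reach :: "real \<Rightarrow> real \<Rightarrow> bool" where
  "reach G T \<longleftrightarrow>
    (\<exists>J1 J3 K2 Q2 J0 Q1 K1 Q3 K3 J2 :: real \<Rightarrow> real.
      (\<forall>t\<in>{0..T}.
        (J1 has_real_derivative (2*G*J3 t)) (at t within {0..T}) \<and>
        (J3 has_real_derivative (-2*G*J1 t + 2*G*K2 t)) (at t within {0..T}) \<and>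
        (K2 has_real_derivative (2*G*J3 t + 2*Q2 t)) (at t within {0..T}) \<and>
        (Q2 has_real_derivative (-2*K2 t)) (at t within {0..T}) \<and>
        (J0 has_real_derivative (-2*G*Q1 t)) (at t within {0..T}) \<and>
        (Q1 has_real_derivative (-2*G*J0 t - 2*K1 t + 2*G*Q3 t)) (at t within {0..T}) \<and>
        (K1 has_real_derivative (2*Q1 t + 2*G*K3 t)) (at t within {0..T}) \<and>
        (Q3 has_real_derivative (-2*G*Q1 t - 2*K3 t)) (at t within {0..T}) \<and>
        (K3 has_real_derivative (-2*G*K1 t + 2*Q3 t - 2*G*J2 t)) (at t within {0..T}) \<and>
        (J2 has_real_derivative (-2*G*K3 t)) (at t within {0..T})) \<and>
      J1 0 = -1 \<and> J3 0 = 0 \<and> K2 0 = 0 \<and> Q2 0 = 0 \<and>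
      J0 0 = 1 \<and> Q1 0 = 0 \<and> K1 0 = 0 \<and> Q3 0 = 0 \<and> K3 0 = 0 \<and> J2 0 = 0 \<and>
      J1 T = 1 \<and> J3 T = 0 \<and> K2 T = 0 \<and> Q2 T = 0 \<and>
      J0 T = 1 \<and> Q1 T = 0 \<and> K1 T = 0 \<and> Q3 T = 0 \<and> K3 T = 0 \<and> J2 T = 0)"

end

theory Submission
  imports Defs
begin

lemma inv_cos:
  fixes G w T :: real and J1 J3 K2 Q2 :: "real \<Rightarrow> real"
  assumes G: "G > 0" and w: "w > 0" and q: "w^4 - 4 * w^2 + 16 * G^2 = 0" and T: "T \<ge> 0"
    and d: "\<And>t. t \<in> {0..T} \<Longrightarrow>
        (J1 has_real_derivative (2 * G*J3 t)) (at t within {0..T}) \<and>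
        (J3 has_real_derivative (-2 * G*J1 t + 2 * G*K2 t)) (at t within {0..T}) \<and>
        (K2 has_real_derivative (2 * G*J3 t + 2 * Q2 t)) (at t within {0..T}) \<and>
        (Q2 has_real_derivative (-2 * K2 t)) (at t within {0..T})"
    and i: "J1 0 = -1" "K2 0 = 0" and f: "J1 T = 1" "J3 T = 0" "K2 T = 0" "Q2 T = 0"
  shows "cos (w * T) = -1"
proof -
  define u3 where "u3 = w^2/(4 * G^2) - 1"
  define y2 where "y2 = -w/(2 * G)"
  define y4 where "y4 = -2 * u3/w"
  have h1: "2 * G + 2 * G*u3 + w * y2 = 0" using G unfolding u3_def y2_def by (simp add: field_simps power2_eq_square)
  have h2: "2 * u3 + w * y4 = 0" using w unfolding y4_def by (simp add: field_simps)
  have h3: "-w - 2 * G*y2 = 0" using G unfolding y2_def by (simp add: field_simps)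
  have h4: "-w * u3 + 2 * G*y2 - 2 * y4 = 0"
  proof -
    have "(-w * u3 + 2 * G*y2 - 2 * y4) * (w*4 * G^2) = -(w^4 - 4 * w^2 + 16 * G^2)"
      using G w unfolding u3_def y2_def y4_def by (simp add: field_simps power2_eq_square) (simp add: algebra_simps power4_eq_xxxx)
    then show ?thesis using q G w by simp
  qed
  define P where "P = (\<lambda>t. cos(w * t) * (J1 t + u3 * K2 t) + sin(w * t) * (y2 * J3 t + y4 * Q2 t))"
  have "\<exists>c. \<forall>t\<in>{0..T}. P t = c"
  proof (rule has_field_derivative_zero_constant)
    fix t assume t: "t \<in> {0..T}"
    note dd = d[OF t]
    have "(P has_real_derivative
       (-(w * sin(w * t)) * (J1 t + u3 * K2 t) + cos(w * t) * (2 * G*J3 t + u3 * (2 * G*J3 t + 2 * Q2 t))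
        + w * cos(w * t) * (y2 * J3 t + y4 * Q2 t) + sin(w * t) * (y2 * (-2 * G*J1 t + 2 * G*K2 t) + y4 * (-2 * K2 t))))
        (at t within {0..T})"
      unfolding P_def using dd
      by (auto intro!: derivative_eq_intros simp: algebra_simps)
    moreover have "(-(w * sin(w * t)) * (J1 t + u3 * K2 t) + cos(w * t) * (2 * G*J3 t + u3 * (2 * G*J3 t + 2 * Q2 t))
        + w * cos(w * t) * (y2 * J3 t + y4 * Q2 t) + sin(w * t) * (y2 * (-2 * G*J1 t + 2 * G*K2 t) + y4 * (-2 * K2 t)))
      = cos(w * t) * J3 t * (2 * G + 2 * G*u3 + w * y2) + cos(w * t) * Q2 t * (2 * u3 + w * y4)
        + sin(w * t) * J1 t * (-w - 2 * G*y2) + sin(w * t) * K2 t * (-w * u3 + 2 * G*y2 - 2 * y4)"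
      by (simp add: algebra_simps)
    moreover have "cos(w * t) * J3 t * (2 * G + 2 * G * u3 + w * y2) + cos(w * t) * Q2 t * (2 * u3 + w * y4)
        + sin(w * t) * J1 t * (-w - 2 * G * y2) + sin(w * t) * K2 t * (-w * u3 + 2 * G * y2 - 2 * y4) = 0"
      unfolding h1 h2 h3 h4 by simp
    ultimately show "(P has_field_derivative 0) (at t within {0..T})" by metis
  qed simp
  then obtain c where c: "\<forall>t\<in>{0..T}. P t = c" by blast
  have "P 0 = P T" using c T by auto
  then show ?thesis unfolding P_def using i f by simp
qed

lemma int_part:
  fixes p q n :: int
  assumes "odd p" "odd q" "odd n" "n \<ge> 1" "q > 0" "p > q"
    and "p * q * (n^2 + 1) < n * (p^2 + q^2)"
  shows "p^2 + q^2 \<ge> (n+2)^2 + 1"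
proof -
  have e: "n * (p^2 + q^2) - p * q * (n^2 + 1) = (n*p - q) * (p - n*q)" by (simp add: algebra_simps power2_eq_square)
  have "n*p \<ge> 1*p" using assms by (intro mult_right_mono) auto
  then have a: "n*p - q > 0" using assms by linarith
  have "(n*p - q) * (p - n*q) > 0" using e assms by simp
  then have "p - n*q > 0" using a by (simp add: zero_less_mult_iff)
  then have pn: "p > n*q" by simp
  have "p \<ge> n + 2"
  proof (cases "q = 1")
    case True
    then have "p > n" using pn by simp
    then show ?thesis using assms(1,3) by presburger
  next
    case False
    then have "q \<ge> 3" using assms(2,5) by presburger
    then have "n*q \<ge> n*3" using assms(4) by simp
    then show ?thesis using pn assms(4) by linarith
  qed
  then have "p^2 \<ge> (n+2)^2" using assms(4) by (simp add: power_mono)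
  moreover have "q*q \<ge> 1*1" using assms(5) by (intro mult_mono) auto
  then have "q^2 \<ge> 1" by (simp add: power2_eq_square)
  ultimately show ?thesis by simp
qed

lemma lower:
  fixes m :: nat and G T :: real
  assumes "odd m" "m \<ge> 3" "T > 0" "G > 0" and Gl: "G < (real m - 2) / ((real m - 2)^2 + 1)"
    and r: "reach G T"
  shows "pi / 2 * sqrt (real m ^ 2 + 1) \<le> T"
proof -
  define n where "n = real m - 2"
  have n1: "n \<ge> 1" using assms(2) unfolding n_def by simp
  have "0 \<le> (n-1)^2" by simp
  then have "2*n \<le> n^2+1" by (simp add: algebra_simps power2_eq_square)
  moreover have dpos: "n^2 + 1 > 0" by (simp add: add_nonneg_pos)
  ultimately have nh: "n / (n^2+1) \<le> 1/2" by (simp add: pos_divide_le_eq)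
  have Gn: "G < n / (n^2+1)" using Gl n_def by simp
  then have Gh: "G < 1/2" using nh by linarith
  obtain J1 J3 K2 Q2 J0 Q1 K1 Q3 K3 J2 :: "real \<Rightarrow> real" where
    d: "\<forall>t\<in>{0..T}.
        (J1 has_real_derivative (2*G*J3 t)) (at t within {0..T}) \<and>
        (J3 has_real_derivative (-2*G*J1 t + 2*G*K2 t)) (at t within {0..T}) \<and>
        (K2 has_real_derivative (2*G*J3 t + 2*Q2 t)) (at t within {0..T}) \<and>
        (Q2 has_real_derivative (-2*K2 t)) (at t within {0..T}) \<and>
        (J0 has_real_derivative (-2*G*Q1 t)) (at t within {0..T}) \<and>
        (Q1 has_real_derivative (-2*G*J0 t - 2*K1 t + 2*G*Q3 t)) (at t within {0..T}) \<and>
        (K1 has_real_derivative (2*Q1 t + 2*G*K3 t)) (at t within {0..T}) \<and>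
        (Q3 has_real_derivative (-2*G*Q1 t - 2*K3 t)) (at t within {0..T}) \<and>
        (K3 has_real_derivative (-2*G*K1 t + 2*Q3 t - 2*G*J2 t)) (at t within {0..T}) \<and>
        (J2 has_real_derivative (-2*G*K3 t)) (at t within {0..T})"
    and v: "J1 0 = -1" "K2 0 = 0" "J1 T = 1" "J3 T = 0" "K2 T = 0" "Q2 T = 0"
    using r unfolding reach_def by blast
  have dA: "\<And>t. t \<in> {0..T} \<Longrightarrow>
        (J1 has_real_derivative (2*G*J3 t)) (at t within {0..T}) \<and>
        (J3 has_real_derivative (-2*G*J1 t + 2*G*K2 t)) (at t within {0..T}) \<and>
        (K2 has_real_derivative (2*G*J3 t + 2*Q2 t)) (at t within {0..T}) \<and>
        (Q2 has_real_derivative (-2*K2 t)) (at t within {0..T})" using d by blast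
  define A where "A = sqrt (1 + 2*G)"
  define B where "B = sqrt (1 - 2*G)"
  have A2: "A^2 = 1 + 2*G" unfolding A_def using assms(4) by simp
  have B2: "B^2 = 1 - 2*G" unfolding B_def using Gh by simp
  have Bp: "B > 0" unfolding B_def using Gh by simp
  have AB: "A > B" unfolding A_def B_def using assms(4) by (simp add: real_sqrt_less_iff)
  define wp where "wp = A + B"
  define wm where "wm = A - B"
  have wpp: "wp > 0" "wm > 0" "wp > wm" using AB Bp unfolding wp_def wm_def by auto
  have ABp: "(A*B)^2 = 1 - 4*G^2"
  proof -
    have "(A*B)^2 = A^2 * B^2" by (simp add: power_mult_distrib)
    also have "\<dots> = (1+2*G)*(1-2*G)" using A2 B2 by simp
    finally show ?thesis by (simp add: algebra_simps power2_eq_square)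
  qed
  have sqp: "wp^2 = 2 + 2*(A*B)" unfolding wp_def using A2 B2 by (simp add: power2_sum)
  have sqm: "wm^2 = 2 - 2*(A*B)" unfolding wm_def using A2 B2 by (simp add: power2_diff)
  have p4: "\<And>x::real. x^4 = (x^2)^2" by (simp add: power2_eq_square power4_eq_xxxx)
  have qp: "wp^4 - 4*wp^2 + 16*G^2 = 0"
    unfolding p4 sqp using ABp by (simp add: power2_eq_square algebra_simps)
  have qm: "wm^4 - 4*wm^2 + 16*G^2 = 0"
    unfolding p4 sqm using ABp by (simp add: power2_eq_square algebra_simps)
  have cp: "cos (wp*T) = -1" by (rule inv_cos[OF assms(4) wpp(1) qp _ dA v]) (use assms(3) in auto)
  have cm: "cos (wm*T) = -1" by (rule inv_cos[OF assms(4) wpp(2) qm _ dA v]) (use assms(3) in auto)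
  obtain k :: int where k: "wp*T = (2*real_of_int k+1)*pi" using cp by (auto simp: cos_eq_minus1)
  obtain j :: int where j: "wm*T = (2*real_of_int j+1)*pi" using cm by (auto simp: cos_eq_minus1)
  define p where "p = 2*k+1"
  define q where "q = 2*j+1"
  have kp: "wp*T = of_int p * pi" using k unfolding p_def by simp
  have jq: "wm*T = of_int q * pi" using j unfolding q_def by simp
  have "of_int q * pi > 0" using jq wpp assms(3) by (metis mult_pos_pos)
  then have q0: "q > 0" by (simp add: zero_less_mult_iff)
  have "of_int q * pi < of_int p * pi" using jq kp wpp assms(3) by (metis mult_strict_right_mono)
  then have pq: "q < p" by simp
  have s1: "wp^2 + wm^2 = 4" using sqp sqm by simp
  have s2: "wp * wm = 4*G" unfolding wp_def wm_def using A2 B2 by (simp add: algebra_simps power2_eq_square)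
  have e1: "(of_int p^2 + of_int q^2) * pi^2 = 4 * T^2"
  proof -
    have "(of_int p^2 + of_int q^2) * pi^2 = (wp*T)^2 + (wm*T)^2" unfolding kp jq by (simp add: algebra_simps power2_eq_square)
    also have "\<dots> = (wp^2 + wm^2) * T^2" by (simp add: algebra_simps power2_eq_square)
    finally show ?thesis using s1 by simp
  qed
  have e2: "of_int p * of_int q * pi^2 = 4 * G * T^2"
  proof -
    have "of_int p * of_int q * pi^2 = (wp*T) * (wm*T)" unfolding kp jq by (simp add: algebra_simps power2_eq_square)
    also have "\<dots> = (wp*wm) * T^2" by (simp add: algebra_simps power2_eq_square)
    finally show ?thesis using s2 by simp
  qed
  have "G * (n^2+1) < n" using Gn dpos by (simp add: pos_less_divide_eq)
  then have lt: "4*T^2 * (G * (n^2+1)) < 4*T^2 * n" using assms(3) by simp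
  have l1: "of_int p * of_int q * (n^2+1) * pi^2 = 4*T^2 * (G * (n^2+1))"
  proof -
    have "of_int p * of_int q * (n^2+1) * pi^2 = (of_int p * of_int q * pi^2) * (n^2+1)" by (simp only: ac_simps)
    also have "\<dots> = (4 * G * T^2) * (n^2+1)" by (simp only: e2)
    also have "\<dots> = 4*T^2 * (G * (n^2+1))" by (simp only: ac_simps)
    finally show ?thesis .
  qed
  have l2: "n * (of_int p^2 + of_int q^2) * pi^2 = 4*T^2 * n"
  proof -
    have "n * (of_int p^2 + of_int q^2) * pi^2 = ((of_int p^2 + of_int q^2) * pi^2) * n" by (simp only: ac_simps)
    also have "\<dots> = (4 * T^2) * n" by (simp only: e1)
    finally show ?thesis .
  qed
  have "(of_int p * of_int q * (n^2+1)) * pi^2 < (n * (of_int p^2 + of_int q^2)) * pi^2"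
    using lt unfolding l1 l2 .
  then have "of_int p * of_int q * (n^2+1) < n * (of_int p^2 + of_int q^2)"
    using pi_gt_zero by (simp only: mult_less_cancel_right zero_less_power2) (simp add: pi_neq_zero)
  moreover define ni where "ni = int m - 2"
  moreover have "n = of_int ni" unfolding n_def ni_def by simp
  ultimately have ii: "real_of_int (p * q * (ni^2+1)) < real_of_int (ni * (p^2 + q^2))" by simp
  have ii': "p * q * (ni^2+1) < ni * (p^2 + q^2)" using ii of_int_less_iff by blast
  have op: "odd p" "odd q" unfolding p_def q_def by simp_all
  have on: "odd ni" "ni \<ge> 1" using assms(1,2) unfolding ni_def by (auto simp: even_add)
  have "p^2 + q^2 \<ge> (ni+2)^2 + 1"
    by (rule int_part[OF op on q0 pq ii'])
  then have "real_of_int (p^2 + q^2) \<ge> real_of_int ((ni+2)^2 + 1)" by linarith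
  then have "of_int p^2 + of_int q^2 \<ge> real m ^2 + 1" unfolding ni_def by simp
  then have "(real m ^2 + 1) * pi^2 \<le> (of_int p^2 + of_int q^2) * pi^2"
    by (intro mult_right_mono) auto
  then have h4: "(real m ^2 + 1) * pi^2 \<le> 4 * T^2" using e1 by simp
  have "(pi/2 * sqrt (real m ^ 2 + 1))^2 = (real m ^2 + 1) * pi^2 / 4"
    by (simp add: power_mult_distrib power_divide)
  then have "(pi/2 * sqrt (real m ^ 2 + 1))^2 \<le> T^2" using h4 by linarith
  from power2_le_imp_le[OF this] show ?thesis using assms(3) by simp
qed


lemma genA:
  fixes A1 B1 A2 B2 A3 B3 A4 B4 w1 w2 G t :: real
  assumes r: "-w1*A1 = 2*G*A3" "-w2*B1 = 2*G*B3"
     "w1*A3 = -2*G*A1 + 2*G*A2" "w2*B3 = -2*G*B1 + 2*G*B2"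
     "-w1*A2 = 2*G*A3 + 2*A4" "-w2*B2 = 2*G*B3 + 2*B4"
     "w1*A4 = -2*A2" "w2*B4 = -2*B2"
  defines "J1 \<equiv> \<lambda>t. A1* cos(w1*t) + B1* cos(w2*t)"
      and "J3 \<equiv> \<lambda>t. A3* sin(w1*t) + B3* sin(w2*t)"
      and "K2 \<equiv> \<lambda>t. A2* cos(w1*t) + B2* cos(w2*t)"
      and "Q2 \<equiv> \<lambda>t. A4* sin(w1*t) + B4* sin(w2*t)"
  shows "(J1 has_real_derivative (2*G*J3 t)) (at t) \<and>
         (J3 has_real_derivative (-2*G*J1 t + 2*G*K2 t)) (at t) \<and>
         (K2 has_real_derivative (2*G*J3 t + 2*Q2 t)) (at t) \<and>
         (Q2 has_real_derivative (-2*K2 t)) (at t)"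
  unfolding J1_def J3_def K2_def Q2_def
  apply (intro conjI)
  apply (rule derivative_eq_intros refl)+ using r apply algebra
  apply (rule derivative_eq_intros refl)+ using r apply algebra
  apply (rule derivative_eq_intros refl)+ using r apply algebra
  apply (rule derivative_eq_intros refl)+ using r apply algebra
  done

lemma genB:
  fixes c0 a0 b0 a1 b1 c2 a2 b2 c3 a3 b3 a4 b4 c5 a5 b5 n1 n2 G t :: real
  assumes r: "-n1*a0 = -2*G*a1" "-n2*b0 = -2*G*b1"
     "n1*a1 = -2*G*a0 - 2*a2 + 2*G*a3" "n2*b1 = -2*G*b0 - 2*b2 + 2*G*b3" "0 = -2*G*c0 - 2*c2 + 2*G*c3"
     "-n1*a2 = 2*a1 + 2*G*a4" "-n2*b2 = 2*b1 + 2*G*b4"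
     "-n1*a3 = -2*G*a1 - 2*a4" "-n2*b3 = -2*G*b1 - 2*b4"
     "n1*a4 = -2*G*a2 + 2*a3 - 2*G*a5" "n2*b4 = -2*G*b2 + 2*b3 - 2*G*b5" "0 = -2*G*c2 + 2*c3 - 2*G*c5"
     "-n1*a5 = -2*G*a4" "-n2*b5 = -2*G*b4"
  defines "J0 \<equiv> \<lambda>t. c0 + a0 * cos(n1*t) + b0 * cos(n2*t)"
      and "Q1 \<equiv> \<lambda>t. a1 * sin(n1*t) + b1 * sin(n2*t)"
      and "K1 \<equiv> \<lambda>t. c2 + a2 * cos(n1*t) + b2 * cos(n2*t)"
      and "Q3 \<equiv> \<lambda>t. c3 + a3 * cos(n1*t) + b3 * cos(n2*t)"
      and "K3 \<equiv> \<lambda>t. a4 * sin(n1*t) + b4 * sin(n2*t)"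
      and "J2 \<equiv> \<lambda>t. c5 + a5 * cos(n1*t) + b5 * cos(n2*t)"
  shows "(J0 has_real_derivative (-2*G*Q1 t)) (at t) \<and>
        (Q1 has_real_derivative (-2*G*J0 t - 2*K1 t + 2*G*Q3 t)) (at t) \<and>
        (K1 has_real_derivative (2*Q1 t + 2*G*K3 t)) (at t) \<and>
        (Q3 has_real_derivative (-2*G*Q1 t - 2*K3 t)) (at t) \<and>
        (K3 has_real_derivative (-2*G*K1 t + 2*Q3 t - 2*G*J2 t)) (at t) \<and>
        (J2 has_real_derivative (-2*G*K3 t)) (at t)"
  unfolding J0_def Q1_def K1_def Q3_def K3_def J2_def
  apply (intro conjI)
  apply (rule derivative_eq_intros refl)+ using r apply algebra
  apply (rule derivative_eq_intros refl)+ using r apply algebra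
  apply (rule derivative_eq_intros refl)+ using r apply algebra
  apply (rule derivative_eq_intros refl)+ using r apply algebra
  apply (rule derivative_eq_intros refl)+ using r apply algebra
  apply (rule derivative_eq_intros refl)+ using r apply algebra
  done

lemma cid0:
  fixes M s p q :: real
  assumes nz: "s \<noteq> 0" "p \<noteq> 0" "q \<noteq> 0" and e: "p = M+1" "q = M-1" "s^2 = M^2 + 1"
  shows "-(2 * p / s) * (-(M^2) / (2 * p^2 * s^2)) = -2 * (M / s^2) * (-(M / (2 * p * s)))"
  by (simp add: field_simps nz; ((simp add: algebra_simps power2_eq_square power3_eq_cube power4_eq_xxxx; fail) | (use e in algebra)))

lemma cid1:
  fixes M s p q :: real
  assumes nz: "s \<noteq> 0" "p \<noteq> 0" "q \<noteq> 0" and e: "p = M+1" "q = M-1" "s^2 = M^2 + 1"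
  shows "-(2 * q / s) * (-(M^2) / (2 * q^2 * s^2)) = -2 * (M / s^2) * (-(M / (2 * q * s)))"
  by (simp add: field_simps nz; ((simp add: algebra_simps power2_eq_square power3_eq_cube power4_eq_xxxx; fail) | (use e in algebra)))

lemma cid2:
  fixes M s p q :: real
  assumes nz: "s \<noteq> 0" "p \<noteq> 0" "q \<noteq> 0" and e: "p = M+1" "q = M-1" "s^2 = M^2 + 1"
  shows "(2 * p / s) * (-(M / (2 * p * s))) = -2 * (M / s^2) * (-(M^2) / (2 * p^2 * s^2)) - 2 * (M * (M^2+M+1) / (2 * p^2 * s^2)) + 2 * (M / s^2) * (-(M * (M^2+M+1) / (2 * p^2 * s^2)))"
  by (simp add: field_simps nz; ((simp add: algebra_simps power2_eq_square power3_eq_cube power4_eq_xxxx; fail) | (use e in algebra)))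

lemma cid3:
  fixes M s p q :: real
  assumes nz: "s \<noteq> 0" "p \<noteq> 0" "q \<noteq> 0" and e: "p = M+1" "q = M-1" "s^2 = M^2 + 1"
  shows "(2 * q / s) * (-(M / (2 * q * s))) = -2 * (M / s^2) * (-(M^2) / (2 * q^2 * s^2)) - 2 * (M * (M^2-M+1) / (2 * q^2 * s^2)) + 2 * (M / s^2) * (M * (M^2-M+1) / (2 * q^2 * s^2))"
  by (simp add: field_simps nz; ((simp add: algebra_simps power2_eq_square power3_eq_cube power4_eq_xxxx; fail) | (use e in algebra)))

lemma cid4:
  fixes M s p q :: real
  assumes nz: "s \<noteq> 0" "p \<noteq> 0" "q \<noteq> 0" and e: "p = M+1" "q = M-1" "s^2 = M^2 + 1"
  shows "0 = -2 * (M / s^2) * (1 + M^2 / (2 * p^2 * s^2) + M^2 / (2 * q^2 * s^2)) - 2 * (-(M * (M^2+M+1) / (2 * p^2 * s^2)) - M * (M^2-M+1) / (2 * q^2 * s^2)) + 2 * (M / s^2) * (M * (M^2+M+1) / (2 * p^2 * s^2) - M * (M^2-M+1) / (2 * q^2 * s^2))"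
  by (simp add: field_simps nz; ((simp add: algebra_simps power2_eq_square power3_eq_cube power4_eq_xxxx; fail) | (use e in algebra)))

lemma cid5:
  fixes M s p q :: real
  assumes nz: "s \<noteq> 0" "p \<noteq> 0" "q \<noteq> 0" and e: "p = M+1" "q = M-1" "s^2 = M^2 + 1"
  shows "-(2 * p / s) * (M * (M^2+M+1) / (2 * p^2 * s^2)) = 2 * (-(M / (2 * p * s))) + 2 * (M / s^2) * (-(M / (2 * p * s)))"
  by (simp add: field_simps nz; ((simp add: algebra_simps power2_eq_square power3_eq_cube power4_eq_xxxx; fail) | (use e in algebra)))

lemma cid6:
  fixes M s p q :: real
  assumes nz: "s \<noteq> 0" "p \<noteq> 0" "q \<noteq> 0" and e: "p = M+1" "q = M-1" "s^2 = M^2 + 1"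
  shows "-(2 * q / s) * (M * (M^2-M+1) / (2 * q^2 * s^2)) = 2 * (-(M / (2 * q * s))) + 2 * (M / s^2) * (M / (2 * q * s))"
  by (simp add: field_simps nz; ((simp add: algebra_simps power2_eq_square power3_eq_cube power4_eq_xxxx; fail) | (use e in algebra)))

lemma cid7:
  fixes M s p q :: real
  assumes nz: "s \<noteq> 0" "p \<noteq> 0" "q \<noteq> 0" and e: "p = M+1" "q = M-1" "s^2 = M^2 + 1"
  shows "-(2 * p / s) * (-(M * (M^2+M+1) / (2 * p^2 * s^2))) = -2 * (M / s^2) * (-(M / (2 * p * s))) - 2 * (-(M / (2 * p * s)))"
  by (simp add: field_simps nz; ((simp add: algebra_simps power2_eq_square power3_eq_cube power4_eq_xxxx; fail) | (use e in algebra)))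

lemma cid8:
  fixes M s p q :: real
  assumes nz: "s \<noteq> 0" "p \<noteq> 0" "q \<noteq> 0" and e: "p = M+1" "q = M-1" "s^2 = M^2 + 1"
  shows "-(2 * q / s) * (M * (M^2-M+1) / (2 * q^2 * s^2)) = -2 * (M / s^2) * (-(M / (2 * q * s))) - 2 * (M / (2 * q * s))"
  by (simp add: field_simps nz; ((simp add: algebra_simps power2_eq_square power3_eq_cube power4_eq_xxxx; fail) | (use e in algebra)))

lemma cid9:
  fixes M s p q :: real
  assumes nz: "s \<noteq> 0" "p \<noteq> 0" "q \<noteq> 0" and e: "p = M+1" "q = M-1" "s^2 = M^2 + 1"
  shows "(2 * p / s) * (-(M / (2 * p * s))) = -2 * (M / s^2) * (M * (M^2+M+1) / (2 * p^2 * s^2)) + 2 * (-(M * (M^2+M+1) / (2 * p^2 * s^2))) - 2 * (M / s^2) * (-(M^2) / (2 * p^2 * s^2))"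
  by (simp add: field_simps nz; ((simp add: algebra_simps power2_eq_square power3_eq_cube power4_eq_xxxx; fail) | (use e in algebra)))

lemma cid10:
  fixes M s p q :: real
  assumes nz: "s \<noteq> 0" "p \<noteq> 0" "q \<noteq> 0" and e: "p = M+1" "q = M-1" "s^2 = M^2 + 1"
  shows "(2 * q / s) * (M / (2 * q * s)) = -2 * (M / s^2) * (M * (M^2-M+1) / (2 * q^2 * s^2)) + 2 * (M * (M^2-M+1) / (2 * q^2 * s^2)) - 2 * (M / s^2) * (M^2 / (2 * q^2 * s^2))"
  by (simp add: field_simps nz; ((simp add: algebra_simps power2_eq_square power3_eq_cube power4_eq_xxxx; fail) | (use e in algebra)))

lemma cid11:
  fixes M s p q :: real
  assumes nz: "s \<noteq> 0" "p \<noteq> 0" "q \<noteq> 0" and e: "p = M+1" "q = M-1" "s^2 = M^2 + 1"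
  shows "0 = -2 * (M / s^2) * (-(M * (M^2+M+1) / (2 * p^2 * s^2)) - M * (M^2-M+1) / (2 * q^2 * s^2)) + 2 * (M * (M^2+M+1) / (2 * p^2 * s^2) - M * (M^2-M+1) / (2 * q^2 * s^2)) - 2 * (M / s^2) * (M^2 / (2 * p^2 * s^2) - M^2 / (2 * q^2 * s^2))"
  by (simp add: field_simps nz; ((simp add: algebra_simps power2_eq_square power3_eq_cube power4_eq_xxxx; fail) | (use e in algebra)))

lemma cid12:
  fixes M s p q :: real
  assumes nz: "s \<noteq> 0" "p \<noteq> 0" "q \<noteq> 0" and e: "p = M+1" "q = M-1" "s^2 = M^2 + 1"
  shows "-(2 * p / s) * (-(M^2) / (2 * p^2 * s^2)) = -2 * (M / s^2) * (-(M / (2 * p * s)))"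
  by (simp add: field_simps nz; ((simp add: algebra_simps power2_eq_square power3_eq_cube power4_eq_xxxx; fail) | (use e in algebra)))

lemma cid13:
  fixes M s p q :: real
  assumes nz: "s \<noteq> 0" "p \<noteq> 0" "q \<noteq> 0" and e: "p = M+1" "q = M-1" "s^2 = M^2 + 1"
  shows "-(2 * q / s) * (M^2 / (2 * q^2 * s^2)) = -2 * (M / s^2) * (M / (2 * q * s))"
  by (simp add: field_simps nz; ((simp add: algebra_simps power2_eq_square power3_eq_cube power4_eq_xxxx; fail) | (use e in algebra)))

lemma cid14:
  fixes M s p q :: real
  assumes nz: "s \<noteq> 0" "p \<noteq> 0" "q \<noteq> 0" and e: "p = M+1" "q = M-1" "s^2 = M^2 + 1"
  shows "(1 + M^2 / (2 * p^2 * s^2) + M^2 / (2 * q^2 * s^2)) + (-(M^2) / (2 * p^2 * s^2)) + (-(M^2) / (2 * q^2 * s^2)) = 1"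
  by (simp add: field_simps nz; ((simp add: algebra_simps power2_eq_square power3_eq_cube power4_eq_xxxx; fail) | (use e in algebra)))

lemma cid15:
  fixes M s p q :: real
  assumes nz: "s \<noteq> 0" "p \<noteq> 0" "q \<noteq> 0" and e: "p = M+1" "q = M-1" "s^2 = M^2 + 1"
  shows "(-(M * (M^2+M+1) / (2 * p^2 * s^2)) - M * (M^2-M+1) / (2 * q^2 * s^2)) + (M * (M^2+M+1) / (2 * p^2 * s^2)) + (M * (M^2-M+1) / (2 * q^2 * s^2)) = 0"
  by (simp add: field_simps nz; ((simp add: algebra_simps power2_eq_square power3_eq_cube power4_eq_xxxx; fail) | (use e in algebra)))

lemma cid16:
  fixes M s p q :: real
  assumes nz: "s \<noteq> 0" "p \<noteq> 0" "q \<noteq> 0" and e: "p = M+1" "q = M-1" "s^2 = M^2 + 1"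
  shows "(M * (M^2+M+1) / (2 * p^2 * s^2) - M * (M^2-M+1) / (2 * q^2 * s^2)) + (-(M * (M^2+M+1) / (2 * p^2 * s^2))) + (M * (M^2-M+1) / (2 * q^2 * s^2)) = 0"
  by (simp add: field_simps nz; ((simp add: algebra_simps power2_eq_square power3_eq_cube power4_eq_xxxx; fail) | (use e in algebra)))

lemma cid17:
  fixes M s p q :: real
  assumes nz: "s \<noteq> 0" "p \<noteq> 0" "q \<noteq> 0" and e: "p = M+1" "q = M-1" "s^2 = M^2 + 1"
  shows "(M^2 / (2 * p^2 * s^2) - M^2 / (2 * q^2 * s^2)) + (-(M^2) / (2 * p^2 * s^2)) + (M^2 / (2 * q^2 * s^2)) = 0"
  by (simp add: field_simps nz; ((simp add: algebra_simps power2_eq_square power3_eq_cube power4_eq_xxxx; fail) | (use e in algebra)))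

lemma cid18:
  fixes M s p q :: real
  assumes nz: "s \<noteq> 0" "p \<noteq> 0" "q \<noteq> 0" and e: "p = M+1" "q = M-1" "s^2 = M^2 + 1"
  shows "-(2 * M / s) * (1 / (p * q * s^2)) = 2 * (M / s^2) * (-(1 / (p * q * s)))"
  by (simp add: field_simps nz; ((simp add: algebra_simps power2_eq_square power3_eq_cube power4_eq_xxxx; fail) | (use e in algebra)))

lemma cid19:
  fixes M s p q :: real
  assumes nz: "s \<noteq> 0" "p \<noteq> 0" "q \<noteq> 0" and e: "p = M+1" "q = M-1" "s^2 = M^2 + 1"
  shows "-(2 / s) * (-(M^4) / (p * q * s^2)) = 2 * (M / s^2) * (M^3 / (p * q * s))"
  by (simp add: field_simps nz; ((simp add: algebra_simps power2_eq_square power3_eq_cube power4_eq_xxxx; fail) | (use e in algebra)))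

lemma cid20:
  fixes M s p q :: real
  assumes nz: "s \<noteq> 0" "p \<noteq> 0" "q \<noteq> 0" and e: "p = M+1" "q = M-1" "s^2 = M^2 + 1"
  shows "(2 * M / s) * (-(1 / (p * q * s))) = -2 * (M / s^2) * (1 / (p * q * s^2)) + 2 * (M / s^2) * (-(M^2) / (p * q * s^2))"
  by (simp add: field_simps nz; ((simp add: algebra_simps power2_eq_square power3_eq_cube power4_eq_xxxx; fail) | (use e in algebra)))

lemma cid21:
  fixes M s p q :: real
  assumes nz: "s \<noteq> 0" "p \<noteq> 0" "q \<noteq> 0" and e: "p = M+1" "q = M-1" "s^2 = M^2 + 1"
  shows "(2 / s) * (M^3 / (p * q * s)) = -2 * (M / s^2) * (-(M^4) / (p * q * s^2)) + 2 * (M / s^2) * (M^2 / (p * q * s^2))"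
  by (simp add: field_simps nz; ((simp add: algebra_simps power2_eq_square power3_eq_cube power4_eq_xxxx; fail) | (use e in algebra)))

lemma cid22:
  fixes M s p q :: real
  assumes nz: "s \<noteq> 0" "p \<noteq> 0" "q \<noteq> 0" and e: "p = M+1" "q = M-1" "s^2 = M^2 + 1"
  shows "-(2 * M / s) * (-(M^2) / (p * q * s^2)) = 2 * (M / s^2) * (-(1 / (p * q * s))) + 2 * (M / (p * q * s))"
  by (simp add: field_simps nz; ((simp add: algebra_simps power2_eq_square power3_eq_cube power4_eq_xxxx; fail) | (use e in algebra)))

lemma cid23:
  fixes M s p q :: real
  assumes nz: "s \<noteq> 0" "p \<noteq> 0" "q \<noteq> 0" and e: "p = M+1" "q = M-1" "s^2 = M^2 + 1"
  shows "-(2 / s) * (M^2 / (p * q * s^2)) = 2 * (M / s^2) * (M^3 / (p * q * s)) + 2 * (-(M^2) / (p * q * s))"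
  by (simp add: field_simps nz; ((simp add: algebra_simps power2_eq_square power3_eq_cube power4_eq_xxxx; fail) | (use e in algebra)))

lemma cid24:
  fixes M s p q :: real
  assumes nz: "s \<noteq> 0" "p \<noteq> 0" "q \<noteq> 0" and e: "p = M+1" "q = M-1" "s^2 = M^2 + 1"
  shows "(2 * M / s) * (M / (p * q * s)) = -2 * (-(M^2) / (p * q * s^2))"
  by (simp add: field_simps nz; ((simp add: algebra_simps power2_eq_square power3_eq_cube power4_eq_xxxx; fail) | (use e in algebra)))

lemma cid25:
  fixes M s p q :: real
  assumes nz: "s \<noteq> 0" "p \<noteq> 0" "q \<noteq> 0" and e: "p = M+1" "q = M-1" "s^2 = M^2 + 1"
  shows "(2 / s) * (-(M^2) / (p * q * s)) = -2 * (M^2 / (p * q * s^2))"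
  by (simp add: field_simps nz; ((simp add: algebra_simps power2_eq_square power3_eq_cube power4_eq_xxxx; fail) | (use e in algebra)))

lemma cid26:
  fixes M s p q :: real
  assumes nz: "s \<noteq> 0" "p \<noteq> 0" "q \<noteq> 0" and e: "p = M+1" "q = M-1" "s^2 = M^2 + 1"
  shows "(1 / (p * q * s^2)) + (-(M^4) / (p * q * s^2)) = -1"
  by (simp add: field_simps nz; ((simp add: algebra_simps power2_eq_square power3_eq_cube power4_eq_xxxx; fail) | (use e in algebra)))

lemma cid27:
  fixes M s p q :: real
  assumes nz: "s \<noteq> 0" "p \<noteq> 0" "q \<noteq> 0" and e: "p = M+1" "q = M-1" "s^2 = M^2 + 1"
  shows "(-(M^2) / (p * q * s^2)) + (M^2 / (p * q * s^2)) = 0"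
  by (simp add: field_simps nz; ((simp add: algebra_simps power2_eq_square power3_eq_cube power4_eq_xxxx; fail) | (use e in algebra)))

theorem corollary1:
  fixes m :: nat and G0 :: real
  assumes "odd m" and "m \<ge> 3"
    and "real m / (real m ^ 2 + 1) \<le> G0"
    and "G0 < (real m - 2) / ((real m - 2) ^ 2 + 1)"
  shows "(\<forall>T G. T > 0 \<and> 0 < G \<and> G \<le> G0 \<and> reach G T \<longrightarrow> pi / 2 * sqrt (real m ^ 2 + 1) \<le> T)
         \<and> reach (real m / (real m ^ 2 + 1)) (pi / 2 * sqrt (real m ^ 2 + 1))"
proof
  show "\<forall>T G. T > 0 \<and> 0 < G \<and> G \<le> G0 \<and> reach G T \<longrightarrow> pi / 2 * sqrt (real m ^ 2 + 1) \<le> T"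
  proof (intro allI impI)
    fix T G assume h: "T > 0 \<and> 0 < G \<and> G \<le> G0 \<and> reach G T"
    then have "G < (real m - 2) / ((real m - 2) ^ 2 + 1)" using assms(4) by linarith
    then show "pi / 2 * sqrt (real m ^ 2 + 1) \<le> T" using lower[OF assms(1,2)] h by blast
  qed
next
  define M where "M = real m"
  define s where "s = sqrt (M ^ 2 + 1)"
  define p where "p = M + 1"
  define q where "q = M - 1"
  define T where "T = pi / 2 * s"
  have M3: "M \<ge> 3" using assms(2) unfolding M_def by simp
  have sp: "s > 0" unfolding s_def by (simp add: add_nonneg_pos)
  have nz: "s \<noteq> 0" "p \<noteq> 0" "q \<noteq> 0" using sp M3 unfolding p_def q_def by auto
  have e: "p = M+1" "q = M-1" "s^2 = M^2 + 1" unfolding p_def q_def s_def by (simp_all add: add_nonneg_pos)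
  have Gs: "real m / (real m ^ 2 + 1) = M / s^2" using e(3) unfolding M_def by simp
  have Ts: "pi / 2 * sqrt (real m ^ 2 + 1) = T" unfolding T_def s_def M_def ..
  have ang: "(2 * M / s) * T = real m * pi" "(2 / s) * T = pi" "(2 * p / s) * T = real (m+1) * pi"
     "(2 * q / s) * T = real (m-1) * pi"
    unfolding T_def p_def q_def M_def using sp assms(2) by (simp_all add: field_simps of_nat_diff)
  have c1: "cos (real m * pi) = -1" using assms(1) cos_npi[of m] by simp
  have "even (m+1)" using assms(1) by simp
  then have c3: "cos (real (m+1) * pi) = 1" using cos_npi[of "m+1"] by (simp only: neg_one_even_power)
  have "even (m-1)" using assms(1,2) by (simp add: even_diff_nat)
  then have c4: "cos (real (m-1) * pi) = 1" using cos_npi[of "m-1"] by (simp only: neg_one_even_power)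
  have s1: "sin (real m * pi) = 0" "sin (real (m+1) * pi) = 0" "sin (real (m-1) * pi) = 0"
    by (rule sin_npi)+
  note cs = c1 c3 c4 s1 cos_pi sin_pi
  define J1f where "J1f = (\<lambda>t. (1 / (p * q * s^2)) * cos((2 * M / s) * t) + (-(M^4) / (p * q * s^2)) * cos((2 / s) * t))"
  define J3f where "J3f = (\<lambda>t. (-(1 / (p * q * s))) * sin((2 * M / s) * t) + (M^3 / (p * q * s)) * sin((2 / s) * t))"
  define K2f where "K2f = (\<lambda>t. (-(M^2) / (p * q * s^2)) * cos((2 * M / s) * t) + (M^2 / (p * q * s^2)) * cos((2 / s) * t))"
  define Q2f where "Q2f = (\<lambda>t. (M / (p * q * s)) * sin((2 * M / s) * t) + (-(M^2) / (p * q * s)) * sin((2 / s) * t))"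
  define J0f where "J0f = (\<lambda>t. (1 + M^2 / (2 * p^2 * s^2) + M^2 / (2 * q^2 * s^2)) + (-(M^2) / (2 * p^2 * s^2)) * cos((2 * p / s) * t) + (-(M^2) / (2 * q^2 * s^2)) * cos((2 * q / s) * t))"
  define Q1f where "Q1f = (\<lambda>t. (-(M / (2 * p * s))) * sin((2 * p / s) * t) + (-(M / (2 * q * s))) * sin((2 * q / s) * t))"
  define K1f where "K1f = (\<lambda>t. (-(M * (M^2+M+1) / (2 * p^2 * s^2)) - M * (M^2-M+1) / (2 * q^2 * s^2)) + (M * (M^2+M+1) / (2 * p^2 * s^2)) * cos((2 * p / s) * t) + (M * (M^2-M+1) / (2 * q^2 * s^2)) * cos((2 * q / s) * t))"
  define Q3f where "Q3f = (\<lambda>t. (M * (M^2+M+1) / (2 * p^2 * s^2) - M * (M^2-M+1) / (2 * q^2 * s^2)) + (-(M * (M^2+M+1) / (2 * p^2 * s^2))) * cos((2 * p / s) * t) + (M * (M^2-M+1) / (2 * q^2 * s^2)) * cos((2 * q / s) * t))"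
  define K3f where "K3f = (\<lambda>t. (-(M / (2 * p * s))) * sin((2 * p / s) * t) + (M / (2 * q * s)) * sin((2 * q / s) * t))"
  define J2f where "J2f = (\<lambda>t. (M^2 / (2 * p^2 * s^2) - M^2 / (2 * q^2 * s^2)) + (-(M^2) / (2 * p^2 * s^2)) * cos((2 * p / s) * t) + (M^2 / (2 * q^2 * s^2)) * cos((2 * q / s) * t))"
  have dA: "\<And>t. (J1f has_real_derivative (2*(M / s^2)*J3f t)) (at t) \<and>
         (J3f has_real_derivative (-2*(M / s^2)*J1f t + 2*(M / s^2)*K2f t)) (at t) \<and>
         (K2f has_real_derivative (2*(M / s^2)*J3f t + 2*Q2f t)) (at t) \<and>
         (Q2f has_real_derivative (-2*K2f t)) (at t)"
    unfolding J1f_def J3f_def K2f_def Q2f_def by (rule genA[OF cid18[OF nz e] cid19[OF nz e] cid20[OF nz e] cid21[OF nz e] cid22[OF nz e] cid23[OF nz e] cid24[OF nz e] cid25[OF nz e]])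
  have dB: "\<And>t. (J0f has_real_derivative (-2*(M / s^2)*Q1f t)) (at t) \<and>
        (Q1f has_real_derivative (-2*(M / s^2)*J0f t - 2*K1f t + 2*(M / s^2)*Q3f t)) (at t) \<and>
        (K1f has_real_derivative (2*Q1f t + 2*(M / s^2)*K3f t)) (at t) \<and>
        (Q3f has_real_derivative (-2*(M / s^2)*Q1f t - 2*K3f t)) (at t) \<and>
        (K3f has_real_derivative (-2*(M / s^2)*K1f t + 2*Q3f t - 2*(M / s^2)*J2f t)) (at t) \<and>
        (J2f has_real_derivative (-2*(M / s^2)*K3f t)) (at t)"
    unfolding J0f_def Q1f_def K1f_def Q3f_def K3f_def J2f_def by (rule genB[OF cid0[OF nz e] cid1[OF nz e] cid2[OF nz e] cid3[OF nz e] cid4[OF nz e] cid5[OF nz e] cid6[OF nz e] cid7[OF nz e] cid8[OF nz e] cid9[OF nz e] cid10[OF nz e] cid11[OF nz e] cid12[OF nz e] cid13[OF nz e]])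
  have der: "\<forall>t\<in>{0..T}. (J1f has_real_derivative (2*(M / s^2)*J3f t)) (at t within {0..T}) \<and>
        (J3f has_real_derivative (-2*(M / s^2)*J1f t + 2*(M / s^2)*K2f t)) (at t within {0..T}) \<and>
        (K2f has_real_derivative (2*(M / s^2)*J3f t + 2*Q2f t)) (at t within {0..T}) \<and>
        (Q2f has_real_derivative (-2*K2f t)) (at t within {0..T}) \<and>
        (J0f has_real_derivative (-2*(M / s^2)*Q1f t)) (at t within {0..T}) \<and>
        (Q1f has_real_derivative (-2*(M / s^2)*J0f t - 2*K1f t + 2*(M / s^2)*Q3f t)) (at t within {0..T}) \<and>
        (K1f has_real_derivative (2*Q1f t + 2*(M / s^2)*K3f t)) (at t within {0..T}) \<and>
        (Q3f has_real_derivative (-2*(M / s^2)*Q1f t - 2*K3f t)) (at t within {0..T}) \<and>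
        (K3f has_real_derivative (-2*(M / s^2)*K1f t + 2*Q3f t - 2*(M / s^2)*J2f t)) (at t within {0..T}) \<and>
        (J2f has_real_derivative (-2*(M / s^2)*K3f t)) (at t within {0..T})"
    using dA dB by (blast intro: has_field_derivative_at_within)
  have z_J1f: "J1f 0 = -1" unfolding J1f_def using cid26[OF nz e] by simp
  have e_J1f: "J1f T = 1" unfolding J1f_def ang cs using cid26[OF nz e] by simp
  have z_J3f: "J3f 0 = 0" unfolding J3f_def by simp
  have e_J3f: "J3f T = 0" unfolding J3f_def ang cs by simp
  have z_K2f: "K2f 0 = 0" unfolding K2f_def using cid27[OF nz e] by simp
  have e_K2f: "K2f T = 0" unfolding K2f_def ang cs using cid27[OF nz e] by simp
  have z_Q2f: "Q2f 0 = 0" unfolding Q2f_def by simp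
  have e_Q2f: "Q2f T = 0" unfolding Q2f_def ang cs by simp
  have z_J0f: "J0f 0 = 1" unfolding J0f_def using cid14[OF nz e] by simp
  have e_J0f: "J0f T = 1" unfolding J0f_def ang cs using cid14[OF nz e] by simp
  have z_Q1f: "Q1f 0 = 0" unfolding Q1f_def by simp
  have e_Q1f: "Q1f T = 0" unfolding Q1f_def ang cs by simp
  have z_K1f: "K1f 0 = 0" unfolding K1f_def using cid15[OF nz e] by simp
  have e_K1f: "K1f T = 0" unfolding K1f_def ang cs using cid15[OF nz e] by simp
  have z_Q3f: "Q3f 0 = 0" unfolding Q3f_def using cid16[OF nz e] by simp
  have e_Q3f: "Q3f T = 0" unfolding Q3f_def ang cs using cid16[OF nz e] by simp
  have z_K3f: "K3f 0 = 0" unfolding K3f_def by simp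
  have e_K3f: "K3f T = 0" unfolding K3f_def ang cs by simp
  have z_J2f: "J2f 0 = 0" unfolding J2f_def using cid17[OF nz e] by simp
  have e_J2f: "J2f T = 0" unfolding J2f_def ang cs using cid17[OF nz e] by simp
  show "reach (real m / (real m ^ 2 + 1)) (pi / 2 * sqrt (real m ^ 2 + 1))"
    unfolding reach_def Gs Ts
    apply (rule exI[of _ J1f], rule exI[of _ J3f], rule exI[of _ K2f], rule exI[of _ Q2f], rule exI[of _ J0f],
           rule exI[of _ Q1f], rule exI[of _ K1f], rule exI[of _ Q3f], rule exI[of _ K3f], rule exI[of _ J2f])
    apply (intro conjI)
    by (fact der z_J1f z_J3f z_K2f z_Q2f z_J0f z_Q1f z_K1f z_Q3f z_K3f z_J2f e_J1f e_J3f e_K2f e_Q2f e_J0f e_Q1f e_K1f e_Q3f e_K3f e_J2f)+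
qed

end
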